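(* Let $n\ge 2$ and $b\ge 2$ be integers and $r\ge 0$. The probability that the base-$b$ carries chain for adding $n$ numbers, started at $\kappa_0=0$, is in state $j$ after $r$ steps equals the probability that a random permutation of $S_n$ with law $Q_{b^r}$ (the law of the permutation obtained by performing $r$ successive independent $b$-shuffles starting from the identity) has exactly $j$ descents. In formulas, for $0\le j\le n-1$, $$P_b^r(0,j)=\sum_{\sigma\in S_n:\ d(\sigma)=j} Q_{b^r}(\sigma).$$
   Context: For $\sigma\in S_n$, $\sigma$ has a descent at $i$ ($1\le i\le n-1$) if $\sigma(i+1)<\sigma(i)$; $d(\sigma)$ is the number of descents. Binomial convention: for integers $m$ and $n\ge0$, $\binom{m}{n}=\frac{m(m-1)\cdots(m-n+1)}{n!}$ if $m\ge n$ and $\binom{m}{n}=0$ if $m<n$ (including negative $m$). The $b$-shuffle measure on $S_n$ is $Q_b(\sigma)=\binom{n+b-d(\sigma^{-1})-1}{n}/b^n$ (this is the law of the permutation produced by one $b$-shuffle of the Gilbert–Shannon–Reeds type: cut into $b$ packets multinomially and riffle dropping cards with probability proportional to packet size). It is known that performing an $a$-shuffle followed by a $b$-shuffle gives the law $Q_{ab}$, so $r$ successive $b$-shuffles from the identity yield law $Q_{b^r}$. The base-$b$ carries chain for adding $n$ numbers is the Markov chain $\kappa_0=0,\kappa_1,\kappa_2,\dots$ on $\{0,1,\dots,n-1\}$ given by $\kappa_{t+1}=\lfloor(\kappa_t+X_{t+1,1}+\dots+X_{t+1,n})/b\rfloor$, where the $X_{t,k}$ are i.i.d. uniform on $\{0,1,\dots,b-1\}$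 (the carries when $n$ random base-$b$ integers are added column by column). Its transition matrix is $P_b(i,j)=b^{-n}\sum_{l=0}^{j-\lfloor i/b\rfloor}(-1)^l\binom{n+1}{l}\binom{n-1-i+(j+1-l)b}{n}$, and $P_b^r$ denotes its $r$-step transition matrix. *)

theory Defs
  imports "HOL-Analysis.Analysis" "HOL-Combinatorics.Permutations"
begin

definition binom :: "int \<Rightarrow> nat \<Rightarrow> real" where
  "binom m k = (if m < int k then 0 else real (nat m choose k))"

definition descents :: "nat \<Rightarrow> (nat \<Rightarrow> nat) \<Rightarrow> nat" where
  "descents n \<sigma> = card {i \<in> {1..<n}. \<sigma> (i + 1) < \<sigma> i}"

definition shuffleQ :: "nat \<Rightarrow> nat \<Rightarrow> (nat \<Rightarrow> nat) \<Rightarrow> real" where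
  "shuffleQ b n \<sigma> =
     binom (int n + int b - int (descents n (inv \<sigma>)) - 1) n / real b ^ n"

definition carriesP :: "nat \<Rightarrow> nat \<Rightarrow> nat \<Rightarrow> nat \<Rightarrow> real" where
  "carriesP b n i j =
     (\<Sum>l\<in>{0..int j - int (i div b)}.
        (-1) ^ nat l * binom (int (n + 1)) (nat l)
          * binom (int n - 1 - int i + (int j + 1 - l) * int b) n) / real b ^ n"

fun carriesPpow :: "nat \<Rightarrow> nat \<Rightarrow> nat \<Rightarrow> nat \<Rightarrow> nat \<Rightarrow> real" where
  "carriesPpow b n 0 i j = (if i = j then 1 else 0)"
| "carriesPpow b n (Suc r) i j = (\<Sum>k<n. carriesPpow b n r i k * carriesP b n k j)"

end

theory Submission
  imports Defs
begin

lemma binom_pascal: "binom (Y + 1) (Suc k) = binom Y (Suc k) + binom Y k"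
proof -
  consider "Y \<ge> int k + 1" | "Y = int k" | "Y < int k" by linarith
  then show ?thesis
  proof cases
    case 1
    define m where "m = nat Y"
    have m: "Y = int m" "m \<ge> k + 1" using 1 by (auto simp: m_def)
    then have "nat (Y+1) = Suc m" by simp
    then show ?thesis using m by (simp add: binom_def)
  next
    case 2
    have "nat (Y + 1) = Suc k" using 2 by simp
    then show ?thesis using 2 by (simp add: binom_def)
  next
    case 3 then show ?thesis by (simp add: binom_def)
  qed
qed

lemma binom_of_nat: "binom (int N) k = real (N choose k)"
  by (simp add: binom_def binomial_eq_0)

lemma binom_zero_small: "Y < int k \<Longrightarrow> binom Y k = 0"
  by (simp add: binom_def)

lemma hockey_up: "(\<Sum>t<M. binom (Y + int t) k) = binom (Y + int M) (Suc k) - binom Y (Suc k)"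
proof (induction M)
  case 0 then show ?case by simp
next
  case (Suc M)
  have "binom (Y + int M + 1) (Suc k) = binom (Y + int M) (Suc k) + binom (Y + int M) k"
    by (rule binom_pascal)
  moreover have "Y + int (Suc M) = Y + int M + 1" by simp
  ultimately show ?case using Suc by (simp only: sum.lessThan_Suc)
qed

lemma hockey_down: "(\<Sum>t<M. binom (X - int t) k) = binom (X + 1) (Suc k) - binom (X + 1 - int M) (Suc k)"
proof (induction M)
  case 0 then show ?case by simp
next
  case (Suc M)
  have "binom (X - int M + 1) (Suc k) = binom (X - int M) (Suc k) + binom (X - int M) k"
    by (rule binom_pascal)
  then show ?case using Suc by (simp add: algebra_simps)
qed

lemma telescope:
  fixes g :: "nat \<Rightarrow> real"
  shows "(\<Sum>l\<le>n. (-1)^l * real (n choose l) * (g l - g (Suc l)))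
       = (\<Sum>l\<le>Suc n. (-1)^l * real (Suc n choose l) * g l)"
proof -
  have "(\<Sum>l\<le>Suc n. (-1)^l * real (Suc n choose l) * g l)
      = (\<Sum>l\<le>Suc n. (-1)^l * real (n choose l) * g l)
        + (\<Sum>l\<le>Suc n. (-1)^l * (if l = 0 then 0 else real (n choose (l - 1))) * g l)"
    by (subst sum.distrib[symmetric], rule sum.cong) (auto simp: choose_reduce_nat algebra_simps)
  also have "(\<Sum>l\<le>Suc n. (-1)^l * real (n choose l) * g l) = (\<Sum>l\<le>n. (-1)^l * real (n choose l) * g l)"
    by simp
  also have "(\<Sum>l\<le>Suc n. (-1)^l * (if l = 0 then 0 else real (n choose (l - 1))) * g l)
      = (\<Sum>l\<le>n. (-1)^(Suc l) * real (n choose l) * g (Suc l))"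
    by (subst sum.atMost_Suc_shift) simp
  also have "(\<Sum>l\<le>n. (-1)^(Suc l) * real (n choose l) * g (Suc l))
     = - (\<Sum>l\<le>n. (-1)^l * real (n choose l) * g (Suc l))"
    by (simp add: sum_negf[symmetric])
  finally show ?thesis
    by (simp add: right_diff_distrib sum_subtractf)
qed

definition W :: "nat \<Rightarrow> nat \<Rightarrow> (nat \<Rightarrow> nat) set" where
  "W n B = {1..n} \<rightarrow>\<^sub>E {..<B}"

lemma finite_W[simp]: "finite (W n B)"
  by (simp add: W_def finite_PiE)

lemma card_W: "card (W n B) = B ^ n"
  by (simp add: W_def card_funcsetE)

lemma card_W_Suc:
  "card {v \<in> W (Suc n) B. Q v} = (\<Sum>t<B. card {u \<in> W n B. Q (u(Suc n := t))})"
proof -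
  let ?f = "\<lambda>(y, g). (g :: nat \<Rightarrow> nat)(Suc n := y)"
  have ins: "{1..Suc n} = insert (Suc n) {1..n}" by auto
  have eq: "W (Suc n) B = ?f ` ({..<B} \<times> W n B)"
    unfolding W_def ins by (rule PiE_insert_eq)
  have inj: "inj_on ?f ({..<B} \<times> W n B)"
    unfolding W_def using inj_combinator[of "Suc n" "{1..n}" "\<lambda>_. {..<B}"] by simp
  have "{v \<in> W (Suc n) B. Q v} = ?f ` {p \<in> {..<B} \<times> W n B. Q (?f p)}"
    unfolding eq by auto
  also have "card \<dots> = card {p \<in> {..<B} \<times> W n B. Q (?f p)}"
    by (rule card_image, rule inj_on_subset[OF inj]) auto
  also have "{p \<in> {..<B} \<times> W n B. Q (?f p)} = (SIGMA t:{..<B}. {u \<in> W n B. Q (u(Suc n := t))})"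
    by auto
  also have "card \<dots> = (\<Sum>t<B. card {u \<in> W n B. Q (u(Suc n := t))})"
    by (rule card_SigmaI) auto
  finally show ?thesis .
qed

definition ssum :: "(nat \<Rightarrow> nat) \<Rightarrow> nat \<Rightarrow> nat" where
  "ssum x n = (\<Sum>i\<in>{1..n}. x i)"

lemma ssum_Suc: "ssum x (Suc n) = ssum x n + x (Suc n)"
  by (simp add: ssum_def)

lemma ssum_upd: "ssum (u(Suc n := t)) (Suc n) = ssum u n + t"
proof -
  have "ssum (u(Suc n := t)) n = ssum u n"
    unfolding ssum_def by (rule sum.cong) auto
  then show ?thesis by (simp add: ssum_Suc)
qed

definition NN :: "nat \<Rightarrow> nat \<Rightarrow> int \<Rightarrow> nat" where
  "NN b n m = card {x \<in> W n b. int (ssum x n) \<le> m}"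

lemma NN_Suc: "NN b (Suc n) m = (\<Sum>t<b. NN b n (m - int t))"
  unfolding NN_def card_W_Suc ssum_upd by (intro sum.cong) (auto simp: algebra_simps)

lemma NN_formula:
  "real (NN b n m) = (\<Sum>l\<le>n. (-1)^l * real (n choose l) * binom (m - int l * int b + int n) n)"
proof (induction n arbitrary: m)
  case 0
  have "W 0 b = {\<lambda>_. undefined}" by (simp add: W_def)
  then show ?case by (simp add: NN_def ssum_def binom_def)
next
  case (Suc n)
  have "real (NN b (Suc n) m) = (\<Sum>t<b. \<Sum>l\<le>n. (-1)^l * real (n choose l) * binom (m - int t - int l * int b + int n) n)"
    by (simp add: NN_Suc Suc)
  also have "\<dots> = (\<Sum>l\<le>n. (-1)^l * real (n choose l) * (\<Sum>t<b. binom ((m - int l * int b + int n) - int t) n))"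
    by (subst sum.swap) (simp add: sum_distrib_left algebra_simps)
  also have "\<dots> = (\<Sum>l\<le>n. (-1)^l * real (n choose l) *
      (binom (m - int l * int b + int (Suc n)) (Suc n) - binom (m - int (Suc l) * int b + int (Suc n)) (Suc n)))"
  proof (intro sum.cong refl)
    fix l assume "l \<in> {..n}"
    have h: "(\<Sum>t<b. binom ((m - int l * int b + int n) - int t) n)
      = binom ((m - int l * int b + int n) + 1) (Suc n) - binom ((m - int l * int b + int n) + 1 - int b) (Suc n)"
      by (rule hockey_down)
    have e1: "(m - int l * int b + int n) + 1 = m - int l * int b + int (Suc n)" by simp
    have e2: "(m - int l * int b + int n) + 1 - int b = m - int (Suc l) * int b + int (Suc n)"
      by (simp add: algebra_simps)
    show "(-1)^l * real (n choose l) * (\<Sum>t<b. binom ((m - int l * int b + int n) - int t) n)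
      = (-1)^l * real (n choose l) *
      (binom (m - int l * int b + int (Suc n)) (Suc n) - binom (m - int (Suc l) * int b + int (Suc n)) (Suc n))"
      using h[unfolded e2, unfolded e1] by simp
  qed
  also have "\<dots> = (\<Sum>l\<le>Suc n. (-1)^l * real (Suc n choose l) * binom (m - int l * int b + int (Suc n)) (Suc n))"
    by (rule telescope[where g = "\<lambda>l. binom (m - int l * int b + int (Suc n)) (Suc n)"])
  finally show ?case .
qed

definition cntP :: "nat \<Rightarrow> nat \<Rightarrow> nat \<Rightarrow> nat \<Rightarrow> nat" where
  "cntP b n i j = card {x \<in> W n b. (i + ssum x n) div b = j}"

lemma div_char: "(b::nat) > 0 \<Longrightarrow> (i + S) div b = j \<longleftrightarrow> j * b \<le> i + S \<and> i + S < Suc j * b"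
  by (metis div_less_iff_less_mult div_nat_eqI div_times_less_eq_dividend lessI mult.commute)

lemma cntP_NN:
  assumes "b > 0"
  shows "real (cntP b n i j) = real (NN b n (int (Suc j * b) - 1 - int i)) - real (NN b n (int (j * b) - 1 - int i))"
proof -
  let ?A1 = "{x \<in> W n b. int (ssum x n) \<le> int (Suc j * b) - 1 - int i}"
  let ?A0 = "{x \<in> W n b. int (ssum x n) \<le> int (j * b) - 1 - int i}"
  have eq: "{x \<in> W n b. (i + ssum x n) div b = j} = ?A1 - ?A0"
    using assms by (auto simp: div_char simp del: of_nat_mult)
  have sub: "?A0 \<subseteq> ?A1" by auto
  have "cntP b n i j = card ?A1 - card ?A0"
    unfolding cntP_def eq by (rule card_Diff_subset) (auto intro: finite_subset[OF _ finite_W])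
  moreover have "card ?A0 \<le> card ?A1" by (rule card_mono) (auto intro: finite_subset[OF _ finite_W])
  ultimately show ?thesis by (simp add: NN_def of_nat_diff)
qed

lemma int_range: "int ` {..<nat (J+1)} = {0..J}"
  by (metis Ico_eq_Ico atLeastLessThanPlusOne_atLeastAtMost_int
    image_atLeastZeroLessThan_int less_eq_int_code(1) less_int_code(1)
    nat_eq_iff2 nat_zero_as_int order.strict_implies_order)

lemma carriesP_cnt:
  assumes "b > 0"
  shows "carriesP b n i j = real (cntP b n i j) / real b ^ n"
proof -
  define F where "F l = (-1)^l * real (Suc n choose l) * binom (int n - 1 - int i + (int j + 1 - int l) * int b) n" for l
  define J where "J = int j - int (i div b)"
  have s1: "(\<Sum>l\<in>{0..J}. (-1) ^ nat l * binom (int (n + 1)) (nat l)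
          * binom (int n - 1 - int i + (int j + 1 - l) * int b) n) = (\<Sum>l<nat (J+1). F l)"
  proof -
    have "(\<Sum>l\<in>{0..J}. (-1) ^ nat l * binom (int (n + 1)) (nat l)
          * binom (int n - 1 - int i + (int j + 1 - l) * int b) n)
       = (\<Sum>l\<in>int ` {..<nat (J+1)}. (-1) ^ nat l * binom (int (n + 1)) (nat l)
          * binom (int n - 1 - int i + (int j + 1 - l) * int b) n)" by (simp add: int_range)
    also have "\<dots> = (\<Sum>l<nat (J+1). F l)"
    proof -
      have bb: "binom (1 + int n) x = real (Suc n choose x)" for x
        using binom_of_nat[of "Suc n" x] by simp
      show ?thesis by (subst sum.reindex) (auto simp: F_def bb)
    qed
    finally show ?thesis .
  qed
  define K where "K = max (nat (J+1)) (n+2)"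
  have v1: "F l = 0" if "l \<ge> nat (J+1)" for l
  proof -
    have "int l \<ge> J + 1" using that by linarith
    then have "int j + 1 - int l \<le> int (i div b)" unfolding J_def by linarith
    then have "(int j + 1 - int l) * int b \<le> int (i div b) * int b"
      by (rule mult_right_mono) simp
    also have "\<dots> \<le> int i" by (metis div_times_less_eq_dividend of_nat_le_iff of_nat_mult)
    finally have "int n - 1 - int i + (int j + 1 - int l) * int b < int n" by linarith
    then show ?thesis by (simp add: F_def binom_zero_small)
  qed
  have v2: "F l = 0" if "l > Suc n" for l using that by (simp add: F_def)
  have s2: "(\<Sum>l<nat (J+1). F l) = (\<Sum>l<K. F l)"
    by (rule sum.mono_neutral_left) (auto simp: K_def v1)
  have s3: "(\<Sum>l\<le>Suc n. F l) = (\<Sum>l<K. F l)"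
    by (rule sum.mono_neutral_left) (auto simp: K_def v2)
  define m1 where "m1 = int (Suc j * b) - 1 - int i"
  have m0: "int (j * b) - 1 - int i = m1 - int b" by (simp add: m1_def algebra_simps)
  define g where "g l = binom (m1 - int l * int b + int n) n" for l
  have "real (cntP b n i j) = (\<Sum>l\<le>n. (-1)^l * real (n choose l) * (g l - g (Suc l)))"
  proof -
    have "real (cntP b n i j) = real (NN b n m1) - real (NN b n (m1 - int b))"
      using cntP_NN[OF assms, of n i j] by (simp only: m0 m1_def[symmetric])
    also have "\<dots> = (\<Sum>l\<le>n. (-1)^l * real (n choose l) * (g l - g (Suc l)))"
      unfolding NN_formula
      by (simp add: g_def sum_subtractf[symmetric] algebra_simps)
    finally show ?thesis .
  qed
  also have "\<dots> = (\<Sum>l\<le>Suc n. (-1)^l * real (Suc n choose l) * g l)" by (rule telescope)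
  also have "\<dots> = (\<Sum>l\<le>Suc n. F l)"
    by (intro sum.cong refl) (simp add: F_def g_def m1_def algebra_simps)
  finally have "real (cntP b n i j) = (\<Sum>l\<in>{0..J}. (-1) ^ nat l * binom (int (n + 1)) (nat l)
          * binom (int n - 1 - int i + (int j + 1 - l) * int b) n)"
    using s1 s2 s3 by simp
  then show ?thesis by (simp add: carriesP_def J_def)
qed

definition cntR :: "nat \<Rightarrow> nat \<Rightarrow> nat \<Rightarrow> nat" where
  "cntR B n j = card {x \<in> W n B. ssum x n div B = j}"

lemma W_ext: "y \<in> W n B \<Longrightarrow> i \<notin> {1..n} \<Longrightarrow> y i = undefined"
  by (auto simp: W_def PiE_def extensional_def)

lemma W_lt: "y \<in> W n B \<Longrightarrow> i \<in> {1..n} \<Longrightarrow> y i < B"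
  by (auto simp: W_def PiE_def)

lemma W_memI: "(\<And>i. i \<in> {1..n} \<Longrightarrow> y i < B) \<Longrightarrow> (\<And>i. i \<notin> {1..n} \<Longrightarrow> y i = undefined) \<Longrightarrow> y \<in> W n B"
  by (auto simp: W_def PiE_def extensional_def)

lemma ssum_bound: "y \<in> W n B \<Longrightarrow> ssum y n \<le> n * (B - 1)"
proof -
  assume y: "y \<in> W n B"
  have "ssum y n \<le> of_nat (card {1..n}) * (B - 1)"
    unfolding ssum_def by (rule sum_bounded_above) (use W_lt[OF y] in force)
  then show ?thesis by simp
qed

lemma ssum_div_lt: "y \<in> W n B \<Longrightarrow> n \<ge> 1 \<Longrightarrow> B > 0 \<Longrightarrow> ssum y n div B < n"
proof -
  assume y: "y \<in> W n B" and n: "n \<ge> 1" and B: "B > 0"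
  have "ssum y n \<le> n * (B - 1)" by (rule ssum_bound[OF y])
  also have "\<dots> < n * B" using n B by simp
  finally show ?thesis by (simp add: div_less_iff_less_mult B mult.commute)
qed

lemma split_step:
  assumes b: "b > 0" and R: "R > 0" and n: "n \<ge> 1"
  shows "cntR (R * b) n j = (\<Sum>k<n. cntR R n k * cntP b n k j)"
proof -
  define \<phi> where "\<phi> p = restrict (\<lambda>i. fst p i + R * snd p i) {1..n}" for p :: "(nat \<Rightarrow> nat) \<times> (nat \<Rightarrow> nat)"
  define \<psi> where "\<psi> x = (restrict (\<lambda>i. x i mod R) {1..n}, restrict (\<lambda>i. x i div R) {1..n})" for x :: "nat \<Rightarrow> nat"
  have bij: "bij_betw \<phi> (W n R \<times> W n b) (W n (R * b))"
  proof (rule bij_betw_byWitness[where f' = \<psi>])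
    show "\<forall>a\<in>W n R \<times> W n b. \<psi> (\<phi> a) = a"
    proof
      fix a assume a: "a \<in> W n R \<times> W n b"
      obtain y d where yd: "a = (y, d)" by force
      have y: "y \<in> W n R" and d: "d \<in> W n b" using a yd by auto
      have l1: "y i mod R = y i" if "i \<in> {1..n}" for i using W_lt[OF y that] by simp
      have l2: "(y i + R * d i) div R = d i" if "i \<in> {1..n}" for i using W_lt[OF y that] R by simp
      show "\<psi> (\<phi> a) = a" unfolding yd \<phi>_def \<psi>_def
        using l1 l2 W_ext[OF y] W_ext[OF d] by (auto simp: fun_eq_iff restrict_def)
    qed
    show "\<forall>a'\<in>W n (R * b). \<phi> (\<psi> a') = a'"
    proof
      fix x assume x: "x \<in> W n (R * b)"
      show "\<phi> (\<psi> x) = x"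
        by (rule ext) (auto simp: \<phi>_def \<psi>_def W_ext[OF x])
    qed
    show "\<phi> ` (W n R \<times> W n b) \<subseteq> W n (R * b)"
    proof
      fix x assume "x \<in> \<phi> ` (W n R \<times> W n b)"
      then obtain y d where y: "y \<in> W n R" and d: "d \<in> W n b" and x: "x = \<phi> (y, d)" by auto
      show "x \<in> W n (R * b)"
      proof (rule W_memI)
        fix i assume i: "i \<in> {1..n}"
        have "y i + R * d i < R + R * d i" using W_lt[OF y i] by simp
        also have "\<dots> = R * (d i + 1)" by simp
        also have "\<dots> \<le> R * b" using W_lt[OF d i] by (intro mult_left_mono) auto
        finally show "x i < R * b" using i by (simp add: x \<phi>_def)
      qed (auto simp: x \<phi>_def)
    qed
    show "\<psi> ` W n (R * b) \<subseteq> W n R \<times> W n b"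
    proof
      fix p assume "p \<in> \<psi> ` W n (R * b)"
      then obtain x where x: "x \<in> W n (R * b)" and p: "p = \<psi> x" by auto
      have "fst p \<in> W n R" by (rule W_memI) (auto simp: p \<psi>_def R)
      moreover have "snd p \<in> W n b"
      proof (rule W_memI)
        fix i assume i: "i \<in> {1..n}"
        have "x i < R * b" by (rule W_lt[OF x i])
        then have "x i div R < b" by (simp add: div_less_iff_less_mult R mult.commute)
        then show "snd p i < b" using i by (simp add: p \<psi>_def)
      qed (auto simp: p \<psi>_def)
      ultimately show "p \<in> W n R \<times> W n b" by (cases p) auto
    qed
  qed
  have ss: "ssum (\<phi> (y, d)) n = ssum y n + R * ssum d n" for y d
    unfolding ssum_def \<phi>_def by (simp add: sum.distrib sum_distrib_left)
  have dv: "(ssum y n + R * ssum d n) div (R * b) = (ssum y n div R + ssum d n) div b" for y d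
    by (simp add: div_mult2_eq R add.commute)
  have "cntR (R * b) n j = card {x \<in> W n (R * b). ssum x n div (R * b) = j}" by (simp add: cntR_def)
  also have "{x \<in> W n (R * b). ssum x n div (R * b) = j} = \<phi> ` {p \<in> W n R \<times> W n b. ssum (\<phi> p) n div (R * b) = j}"
    using bij by (auto simp: bij_betw_def)
  also have "card \<dots> = card {p \<in> W n R \<times> W n b. ssum (\<phi> p) n div (R * b) = j}"
    by (rule card_image, rule inj_on_subset[OF bij_betw_imp_inj_on[OF bij]]) auto
  also have "{p \<in> W n R \<times> W n b. ssum (\<phi> p) n div (R * b) = j}
      = (SIGMA y:W n R. {d \<in> W n b. (ssum y n div R + ssum d n) div b = j})"
    by (auto simp: ss dv)
  also have "card \<dots> = (\<Sum>y\<in>W n R. card {d \<in> W n b. (ssum y n div R + ssum d n) div b = j})"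
    by (rule card_SigmaI) auto
  also have "\<dots> = (\<Sum>k<n. \<Sum>y\<in>{y. y \<in> W n R \<and> ssum y n div R = k}. card {d \<in> W n b. (ssum y n div R + ssum d n) div b = j})"
    by (rule sum.group[symmetric]) (auto intro: ssum_div_lt n R)
  also have "\<dots> = (\<Sum>k<n. cntR R n k * cntP b n k j)"
    by (intro sum.cong refl) (simp add: cntR_def cntP_def)
  finally show ?thesis .
qed

lemma Ppow_cnt:
  assumes b: "b > 0" and n: "n \<ge> 1"
  shows "carriesPpow b n r 0 j = real (cntR (b ^ r) n j) / real (b ^ r) ^ n"
proof (induction r arbitrary: j)
  case 0
  have z: "ssum x n = 0" if "x \<in> W n 1" for x
    unfolding ssum_def using W_lt[OF that] by simp
  have "{x \<in> W n 1. ssum x n div 1 = j} = (if j = 0 then W n 1 else {})"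
    using z by auto
  then show ?case by (simp add: cntR_def card_W)
next
  case (Suc r)
  have Rp: "b ^ r > 0" using b by simp
  have "carriesPpow b n (Suc r) 0 j = (\<Sum>k<n. (real (cntR (b ^ r) n k) / real (b ^ r) ^ n) * (real (cntP b n k j) / real b ^ n))"
    by (simp add: Suc carriesP_cnt[OF b])
  also have "\<dots> = (\<Sum>k<n. real (cntR (b ^ r) n k * cntP b n k j)) / real (b ^ Suc r) ^ n"
    by (simp add: sum_divide_distrib power_mult_distrib mult.commute)
  also have "(\<Sum>k<n. real (cntR (b ^ r) n k * cntP b n k j)) = real (cntR (b ^ r * b) n j)"
    by (simp add: split_step[OF b Rp n] del: of_nat_mult) 
  finally show ?case by (simp add: mult.commute)
qed



lemma mod_cancel_nat:
  assumes "(a + u) mod (B::nat) = (a' + u') mod B" "a mod B = a' mod B"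
  shows "u mod B = u' mod B"
proof -
  have "(int a + int u) mod int B = (int a' + int u') mod int B"
    using assms(1) by (metis of_nat_add of_nat_mod)
  moreover have "int a mod int B = int a' mod int B"
    using assms(2) by (metis of_nat_mod)
  ultimately have "int B dvd (int a + int u) - (int a' + int u')" "int B dvd int a - int a'"
    by (simp_all add: mod_eq_dvd_iff)
  then have "int B dvd ((int a + int u) - (int a' + int u')) - (int a - int a')"
    by (rule dvd_diff)
  then have "int B dvd int u - int u'" by (simp add: algebra_simps)
  then have "int u mod int B = int u' mod int B" by (simp add: mod_eq_dvd_iff)
  then show ?thesis by (metis of_nat_eq_iff of_nat_mod)
qed

lemma div_step:
  assumes "(x::nat) < B"
  shows "(S + x) div B = S div B + (if (S + x) mod B < S mod B then 1 else 0)"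
proof -
  have B: "B > 0" using assms by simp
  define q a where "q = S div B" and "a = S mod B"
  have S: "S = q * B + a" and a: "a < B" using B by (simp_all add: q_def a_def)
  show ?thesis
  proof (cases "a + x < B")
    case True
    have e: "S + x = (a + x) + q * B" using S by simp
    have "(S + x) div B = q" "(S + x) mod B = a + x" unfolding e using True B by simp_all
    then show ?thesis by (simp add: q_def[symmetric] a_def[symmetric])
  next
    case False
    have e: "S + x = (a + x - B) + B * (q + 1)" using S False by (simp add: algebra_simps)
    have lt: "a + x - B < B" using a assms by simp
    have "(S + x) div B = q + 1" "(S + x) mod B = a + x - B"
      unfolding e using lt B by (simp_all add: div_mult_self2 del: mult_Suc_right add_Suc_right)
    moreover have "a + x - B < a" using assms False by simp
    ultimately show ?thesis by (simp add: q_def[symmetric] a_def[symmetric])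
  qed
qed

definition desw :: "nat \<Rightarrow> (nat \<Rightarrow> nat) \<Rightarrow> nat" where
  "desw n w = card {i \<in> {1..<n}. w (i + 1) < w i}"

lemma desc_ssum:
  assumes B: "B > 0"
  shows "(\<forall>i\<in>{1..m}. x i < B) \<Longrightarrow> ssum x m div B = card {i \<in> {1..<m}. ssum x (i+1) mod B < ssum x i mod B}"
proof (induction m)
  case 0 then show ?case by (simp add: ssum_def)
next
  case (Suc m)
  show ?case
  proof (cases "m = 0")
    case True
    then show ?thesis using Suc.prems by (simp add: ssum_def)
  next
    case False
    have xm: "x (Suc m) < B" using Suc.prems by simp
    have IH: "ssum x m div B = card {i \<in> {1..<m}. ssum x (i+1) mod B < ssum x i mod B}"
      using Suc by simp
    let ?P = "\<lambda>i. ssum x (i+1) mod B < ssum x i mod B"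
    have d: "ssum x (Suc m) div B = ssum x m div B + (if ?P m then 1 else 0)"
      using div_step[OF xm, of "ssum x m"] by (simp add: ssum_Suc)
    have set: "{i \<in> {1..<Suc m}. ?P i} = (if ?P m then insert m {i \<in> {1..<m}. ?P i} else {i \<in> {1..<m}. ?P i})"
      using False by (auto simp: less_Suc_eq)
    show ?thesis unfolding d IH set by simp
  qed
qed

definition phiB :: "nat \<Rightarrow> nat \<Rightarrow> (nat \<Rightarrow> nat) \<Rightarrow> (nat \<Rightarrow> nat)" where
  "phiB B n x = restrict (\<lambda>k. ssum x k mod B) {1..n}"

lemma phiB_W: "B > 0 \<Longrightarrow> x \<in> W n B \<Longrightarrow> phiB B n x \<in> W n B"
  by (rule W_memI) (auto simp: phiB_def)

lemma desw_phiB: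
  assumes B: "B > 0" and x: "x \<in> W n B"
  shows "desw n (phiB B n x) = ssum x n div B"
proof -
  have "desw n (phiB B n x) = card {i \<in> {1..<n}. ssum x (i+1) mod B < ssum x i mod B}"
    unfolding desw_def phiB_def by (intro arg_cong[where f = card]) auto
  also have "\<dots> = ssum x n div B"
    by (rule desc_ssum[OF B, symmetric]) (use W_lt[OF x] in auto)
  finally show ?thesis .
qed

lemma phiB_inj:
  assumes B: "B > 0"
  shows "inj_on (phiB B n) (W n B)"
proof (rule inj_onI)
  fix x x' assume x: "x \<in> W n B" and x': "x' \<in> W n B" and eq: "phiB B n x = phiB B n x'"
  have m: "ssum x k mod B = ssum x' k mod B" if "k \<le> n" for k
  proof (cases "k = 0")
    case True then show ?thesis by (simp add: ssum_def)
  next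
    case False
    then have "k \<in> {1..n}" using that by auto
    then show ?thesis using fun_cong[OF eq, of k] by (simp add: phiB_def)
  qed
  show "x = x'"
  proof (rule PiE_ext[OF x[unfolded W_def] x'[unfolded W_def]])
    fix i assume i: "i \<in> {1..n}"
    define k where "k = i - 1"
    have k: "i = Suc k" "k < n" using i by (auto simp: k_def)
    have h1: "(ssum x k + x i) mod B = (ssum x' k + x' i) mod B"
      using m[of i] i by (simp add: k ssum_Suc)
    have h2: "ssum x k mod B = ssum x' k mod B" using m[of k] k by simp
    have "x i mod B = x' i mod B" by (rule mod_cancel_nat[OF h1 h2])
    then show "x i = x' i" using W_lt[OF x i] W_lt[OF x' i] by simp
  qed
qed

lemma phiB_image: "B > 0 \<Longrightarrow> phiB B n ` W n B = W n B"
proof -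
  assume B: "B > 0"
  have sub: "phiB B n ` W n B \<subseteq> W n B" using phiB_W[OF B] by auto
  have "card (phiB B n ` W n B) = card (W n B)" by (rule card_image[OF phiB_inj[OF B]])
  then show ?thesis using sub by (intro card_subset_eq) auto
qed

lemma partB:
  assumes B: "B > 0"
  shows "card {w \<in> W n B. desw n w = j} = cntR B n j"
proof -
  have "{w \<in> W n B. desw n w = j} = phiB B n ` {x \<in> W n B. ssum x n div B = j}"
  proof -
    have "{w \<in> W n B. desw n w = j} = {w \<in> phiB B n ` W n B. desw n w = j}"
      using phiB_image[OF B] by simp
    also have "\<dots> = phiB B n ` {x \<in> W n B. ssum x n div B = j}"
      using desw_phiB[OF B] by auto
    finally show ?thesis .
  qed
  also have "card \<dots> = cntR B n j"
    unfolding cntR_def by (rule card_image, rule inj_on_subset[OF phiB_inj[OF B]]) auto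
  finally show ?thesis .
qed

definition lexlt :: "(nat \<Rightarrow> nat) \<Rightarrow> nat \<Rightarrow> nat \<Rightarrow> bool" where
  "lexlt w k i \<longleftrightarrow> w k < w i \<or> (w k = w i \<and> k < i)"

lemma lex_trans: "lexlt w a b \<Longrightarrow> lexlt w b c \<Longrightarrow> lexlt w a c"
  by (auto simp: lexlt_def)
lemma lex_asym: "lexlt w a b \<Longrightarrow> \<not> lexlt w b a"
  by (auto simp: lexlt_def)
lemma lex_total: "a \<noteq> b \<Longrightarrow> lexlt w a b \<or> lexlt w b a"
  by (auto simp: lexlt_def)

definition std :: "nat \<Rightarrow> (nat \<Rightarrow> nat) \<Rightarrow> nat \<Rightarrow> nat" where
  "std n w i = (if i \<in> {1..n} then card {k \<in> {1..n}. lexlt w k i \<or> k = i} else i)"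

lemma std_out: "i \<notin> {1..n} \<Longrightarrow> std n w i = i"
  unfolding std_def by (rule if_not_P)

lemma std_mono:
  assumes i: "i \<in> {1..n}" and k: "k \<in> {1..n}" and lt: "lexlt w k i"
  shows "std n w k < std n w i"
proof -
  have ne: "k \<noteq> i" using lt by (auto simp: lexlt_def)
  have "{k' \<in> {1..n}. lexlt w k' k \<or> k' = k} \<subset> {k' \<in> {1..n}. lexlt w k' i \<or> k' = i}"
  proof
    show "{k' \<in> {1..n}. lexlt w k' k \<or> k' = k} \<subseteq> {k' \<in> {1..n}. lexlt w k' i \<or> k' = i}"
      using lt lex_trans by blast
    have "i \<notin> {k' \<in> {1..n}. lexlt w k' k \<or> k' = k}" using lex_asym[OF lt] ne by auto
    moreover have "i \<in> {k' \<in> {1..n}. lexlt w k' i \<or> k' = i}" using i by auto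
    ultimately show "{k' \<in> {1..n}. lexlt w k' k \<or> k' = k} \<noteq> {k' \<in> {1..n}. lexlt w k' i \<or> k' = i}"
      by blast
  qed
  then have "card {k' \<in> {1..n}. lexlt w k' k \<or> k' = k} < card {k' \<in> {1..n}. lexlt w k' i \<or> k' = i}"
    by (rule psubset_card_mono[rotated]) simp
  then show ?thesis using i k by (simp add: std_def)
qed

lemma std_range:
  assumes i: "i \<in> {1..n}"
  shows "std n w i \<in> {1..n}"
proof -
  have "card {k \<in> {1..n}. lexlt w k i \<or> k = i} \<le> card {1..n}" by (rule card_mono) auto
  moreover have "card {k \<in> {1..n}. lexlt w k i \<or> k = i} \<ge> 1"
  proof -
    have "{k \<in> {1..n}. lexlt w k i \<or> k = i} \<noteq> {}" using i by auto
    then show ?thesis by (simp add: Suc_le_eq card_gt_0_iff)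
  qed
  ultimately show ?thesis using i by (simp add: std_def)
qed

lemma std_inj: "inj_on (std n w) {1..n}"
proof (rule inj_onI)
  fix i k assume i: "i \<in> {1..n}" and k: "k \<in> {1..n}" and eq: "std n w i = std n w k"
  show "i = k"
  proof (rule ccontr)
    assume "i \<noteq> k"
    then have "lexlt w i k \<or> lexlt w k i" by (rule lex_total)
    then show False
    proof
      assume "lexlt w i k" then have "std n w i < std n w k" by (rule std_mono[OF k i])
      then show False using eq by simp
    next
      assume "lexlt w k i" then have "std n w k < std n w i" by (rule std_mono[OF i k])
      then show False using eq by simp
    qed
  qed
qed

lemma std_permutes: "std n w permutes {1..n}"
proof (rule bij_imp_permutes)
  have sub: "std n w ` {1..n} \<subseteq> {1..n}" using std_range by auto
  have "card (std n w ` {1..n}) = card {1..n}" by (rule card_image[OF std_inj])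
  then have "std n w ` {1..n} = {1..n}" using sub by (intro card_subset_eq) auto
  then show "bij_betw (std n w) {1..n} {1..n}" using std_inj by (simp add: bij_betw_def)
  show "\<And>x. x \<notin> {1..n} \<Longrightarrow> std n w x = x" by (rule std_out)
qed

lemma desw_std: "desw n w = descents n (std n w)"
proof -
  have "{i \<in> {1..<n}. w (i + 1) < w i} = {i \<in> {1..<n}. std n w (i + 1) < std n w i}"
  proof (intro Collect_cong conj_cong refl)
    fix i assume i: "i \<in> {1..<n}"
    then have i1: "i \<in> {1..n}" and i2: "i + 1 \<in> {1..n}" by auto
    show "w (i + 1) < w i \<longleftrightarrow> std n w (i + 1) < std n w i"
    proof
      assume "w (i + 1) < w i"
      then have "lexlt w (i+1) i" by (simp add: lexlt_def)
      then show "std n w (i + 1) < std n w i" by (rule std_mono[OF i1 i2])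
    next
      assume a: "std n w (i + 1) < std n w i"
      show "w (i + 1) < w i"
      proof (rule ccontr)
        assume "\<not> w (i + 1) < w i"
        then have "lexlt w i (i+1)" by (auto simp: lexlt_def)
        then have "std n w i < std n w (i + 1)" by (rule std_mono[OF i2 i1])
        then show False using a by simp
      qed
    qed
  qed
  then show ?thesis by (simp add: desw_def descents_def)
qed

lemma perm_card_le:
  assumes p: "p permutes {1..n}" and i: "i \<in> {1..n}"
  shows "card {k \<in> {1..n}. p k \<le> p i} = p i"
proof -
  have pi: "p i \<in> {1..n}" using i permutes_in_image[OF p] by simp
  have "p ` {k \<in> {1..n}. p k \<le> p i} = {m \<in> {1..n}. m \<le> p i}"
  proof
    show "p ` {k \<in> {1..n}. p k \<le> p i} \<subseteq> {m \<in> {1..n}. m \<le> p i}"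
      using permutes_in_image[OF p] by auto
    show "{m \<in> {1..n}. m \<le> p i} \<subseteq> p ` {k \<in> {1..n}. p k \<le> p i}"
    proof
      fix m assume m: "m \<in> {m \<in> {1..n}. m \<le> p i}"
      then have "m \<in> p ` {1..n}" using permutes_image[OF p] by simp
      then obtain k where "k \<in> {1..n}" "m = p k" by auto
      then show "m \<in> p ` {k \<in> {1..n}. p k \<le> p i}" using m by auto
    qed
  qed
  moreover have "{m \<in> {1..n}. m \<le> p i} = {1..p i}" using pi by auto
  ultimately have "card (p ` {k \<in> {1..n}. p k \<le> p i}) = p i" by simp
  moreover have "inj_on p {k \<in> {1..n}. p k \<le> p i}"
    using permutes_inj[OF p] by (auto intro: inj_on_subset)
  ultimately show ?thesis by (simp add: card_image)
qed

lemma std_eq_iff: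
  assumes p: "\<sigma> permutes {1..n}"
  shows "std n w = \<sigma> \<longleftrightarrow> (\<forall>i\<in>{1..n}. \<forall>k\<in>{1..n}. lexlt w k i \<longrightarrow> \<sigma> k < \<sigma> i)"
proof
  assume "std n w = \<sigma>"
  then show "\<forall>i\<in>{1..n}. \<forall>k\<in>{1..n}. lexlt w k i \<longrightarrow> \<sigma> k < \<sigma> i"
    using std_mono by blast
next
  assume H: "\<forall>i\<in>{1..n}. \<forall>k\<in>{1..n}. lexlt w k i \<longrightarrow> \<sigma> k < \<sigma> i"
  show "std n w = \<sigma>"
  proof
    fix i
    show "std n w i = \<sigma> i"
    proof (cases "i \<in> {1..n}")
      case False
      then show ?thesis by (simp add: std_out permutes_not_in[OF p])
    next
      case True
      have "{k \<in> {1..n}. lexlt w k i \<or> k = i} = {k \<in> {1..n}. \<sigma> k \<le> \<sigma> i}"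
      proof (intro Collect_cong conj_cong refl)
        fix k assume k: "k \<in> {1..n}"
        show "(lexlt w k i \<or> k = i) \<longleftrightarrow> \<sigma> k \<le> \<sigma> i"
        proof
          assume "lexlt w k i \<or> k = i"
          then show "\<sigma> k \<le> \<sigma> i" using H True k by force
        next
          assume le: "\<sigma> k \<le> \<sigma> i"
          show "lexlt w k i \<or> k = i"
          proof (rule ccontr)
            assume "\<not> (lexlt w k i \<or> k = i)"
            then have "lexlt w i k" using lex_total by blast
            then have "\<sigma> i < \<sigma> k" using H True k by blast
            then show False using le by simp
          qed
        qed
      qed
      then show ?thesis using True perm_card_le[OF p True] by (simp add: std_def)
    qed
  qed
qed

definition consv :: "nat \<Rightarrow> nat set \<Rightarrow> (nat \<Rightarrow> nat) \<Rightarrow> bool" where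
  "consv n D v \<longleftrightarrow> (\<forall>a\<in>{1..<n}. v a + (if a \<in> D then 1 else 0) \<le> v (a + 1))"

lemma consv_mono:
  assumes c: "consv n D v" and i: "i \<in> {1..n}"
  shows "v i \<le> v n"
proof -
  have "\<forall>i. i \<ge> 1 \<longrightarrow> i + d = n \<longrightarrow> v i \<le> v n" for d
  proof (induction d)
    case 0 then show ?case by simp
  next
    case (Suc d)
    show ?case
    proof (intro allI impI)
      fix i assume i1: "i \<ge> 1" and id: "i + Suc d = n"
      then have "i \<in> {1..<n}" by auto
      then have "v i \<le> v (i + 1)" using c unfolding consv_def by fastforce
      also have "v (i + 1) \<le> v n" using Suc.IH id by auto
      finally show "v i \<le> v n" .
    qed
  qed
  then show ?thesis using i by (metis atLeastAtMost_iff le_add_diff_inverse)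
qed

lemma consv_upd:
  "consv (Suc (Suc m)) D (u(Suc (Suc m) := t)) \<longleftrightarrow>
     consv (Suc m) D u \<and> u (Suc m) + (if Suc m \<in> D then 1 else 0) \<le> t"
proof -
  have set: "{1..<Suc (Suc m)} = insert (Suc m) {1..<Suc m}" by auto
  have "(\<forall>a\<in>{1..<Suc m}. (u(Suc (Suc m) := t)) a + (if a \<in> D then 1 else 0) \<le> (u(Suc (Suc m) := t)) (a + 1))
     \<longleftrightarrow> consv (Suc m) D u"
    unfolding consv_def by (intro ball_cong refl) auto
  then show ?thesis unfolding consv_def[of "Suc (Suc m)"] set by auto
qed

lemma count_consv:
  "real (card {v \<in> W (Suc m) B. consv (Suc m) D v})
     = binom (int B + int (Suc m) - 1 - int (card (D \<inter> {1..<Suc m}))) (Suc m)"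
proof (induction m arbitrary: B)
  case 0
  have "{v \<in> W (Suc 0) B. consv (Suc 0) D v} = W (Suc 0) B" by (auto simp: consv_def)
  then show ?case by (simp add: card_W binom_of_nat)
next
  case (Suc m)
  define n where "n = Suc m"
  define e where "e = (if n \<in> D then 1 else 0 :: nat)"
  define d where "d = card (D \<inter> {1..<n})"
  have e1: "e \<le> 1" by (simp add: e_def)
  have "card {v \<in> W (Suc n) B. consv (Suc n) D v}
      = (\<Sum>t<B. card {u \<in> W n B. consv (Suc n) D (u(Suc n := t))})"
    by (rule card_W_Suc)
  also have "\<dots> = (\<Sum>t<B. card {u \<in> W n (t + 1 - e). consv n D u})"
  proof (intro sum.cong refl)
    fix t assume t: "t \<in> {..<B}"
    have "{u \<in> W n B. consv (Suc n) D (u(Suc n := t))} = {u \<in> W n (t + 1 - e). consv n D u}"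
    proof (intro set_eqI iffI)
      fix u assume u: "u \<in> {u \<in> W n B. consv (Suc n) D (u(Suc n := t))}"
      then have c: "consv n D u" and le: "u n + e \<le> t" and uW: "u \<in> W n B"
        using consv_upd[of m D u t] by (auto simp: n_def e_def)
      have "u \<in> W n (t + 1 - e)"
      proof (rule W_memI)
        fix i assume i: "i \<in> {1..n}"
        have "u i \<le> u n" by (rule consv_mono[OF c i])
        then show "u i < t + 1 - e" using le by linarith
      qed (rule W_ext[OF uW])
      then show "u \<in> {u \<in> W n (t + 1 - e). consv n D u}" using c by simp
    next
      fix u assume u: "u \<in> {u \<in> W n (t + 1 - e). consv n D u}"
      then have c: "consv n D u" and uW: "u \<in> W n (t + 1 - e)" by auto
      have "u n < t + 1 - e" by (rule W_lt[OF uW]) (simp add: n_def)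
      then have le: "u n + e \<le> t" by linarith
      have "u \<in> W n B"
      proof (rule W_memI)
        fix i assume i: "i \<in> {1..n}"
        show "u i < B" using W_lt[OF uW i] t by simp
      qed (rule W_ext[OF uW])
      then show "u \<in> {u \<in> W n B. consv (Suc n) D (u(Suc n := t))}"
        using consv_upd[of m D u t] c le by (simp add: n_def e_def)
    qed
    then show "card {u \<in> W n B. consv (Suc n) D (u(Suc n := t))} = card {u \<in> W n (t + 1 - e). consv n D u}"
      by simp
  qed
  finally have "real (card {v \<in> W (Suc n) B. consv (Suc n) D v})
      = (\<Sum>t<B. real (card {u \<in> W n (t + 1 - e). consv n D u}))" by simp
  also have "\<dots> = (\<Sum>t<B. binom ((int n - int e - int d) + int t) n)"
  proof (intro sum.cong refl)
    fix t
    have "real (card {u \<in> W n (t + 1 - e). consv n D u}) = binom (int (t + 1 - e) + int n - 1 - int d) n"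
      using Suc.IH[of "t + 1 - e"] by (simp add: n_def d_def)
    also have "int (t + 1 - e) + int n - 1 - int d = (int n - int e - int d) + int t"
      using e1 by simp
    finally show "real (card {u \<in> W n (t + 1 - e). consv n D u}) = binom ((int n - int e - int d) + int t) n" .
  qed
  also have "\<dots> = binom (int n - int e - int d + int B) (Suc n) - binom (int n - int e - int d) (Suc n)"
    by (rule hockey_up)
  also have "binom (int n - int e - int d) (Suc n) = 0" by (rule binom_zero_small) simp
  also have "card (D \<inter> {1..<Suc n}) = d + e"
  proof -
    have "D \<inter> {1..<Suc n} = (D \<inter> {1..<n}) \<union> (if n \<in> D then {n} else {})"
      by (auto simp: n_def less_Suc_eq)
    then show ?thesis by (auto simp: d_def e_def n_def)
  qed
  ultimately show ?case by (simp add: n_def algebra_simps)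
qed

lemma good_iff:
  fixes v \<tau> :: "nat \<Rightarrow> nat"
  assumes tau: "\<tau> permutes {1..n}"
  shows "(\<forall>a\<in>{1..n}. \<forall>c\<in>{1..n}. (v a < v c \<or> (v a = v c \<and> \<tau> a < \<tau> c)) \<longrightarrow> a < c)
         \<longleftrightarrow> consv n {a. \<tau> (a + 1) < \<tau> a} v"
proof
  assume G: "\<forall>a\<in>{1..n}. \<forall>c\<in>{1..n}. (v a < v c \<or> (v a = v c \<and> \<tau> a < \<tau> c)) \<longrightarrow> a < c"
  show "consv n {a. \<tau> (a + 1) < \<tau> a} v"
    unfolding consv_def
  proof
    fix a assume a: "a \<in> {1..<n}"
    then have a1: "a \<in> {1..n}" and a2: "a + 1 \<in> {1..n}" by auto
    have "\<not> (v (a+1) < v a \<or> (v (a+1) = v a \<and> \<tau> (a+1) < \<tau> a))"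
    proof
      assume X: "v (a+1) < v a \<or> (v (a+1) = v a \<and> \<tau> (a+1) < \<tau> a)"
      have "a + 1 < a" by (rule G[rule_format, OF a2 a1 X])
      then show False by simp
    qed
    then show "v a + (if a \<in> {a. \<tau> (a + 1) < \<tau> a} then 1 else 0) \<le> v (a + 1)" by auto
  qed
next
  assume c: "consv n {a. \<tau> (a + 1) < \<tau> a} v"
  have inj: "inj \<tau>" by (rule permutes_inj[OF tau])
  have base: "v a < v (a+1) \<or> (v a = v (a+1) \<and> \<tau> a < \<tau> (a+1))" if a: "a \<in> {1..<n}" for a
  proof -
    have le: "v a + (if \<tau> (a + 1) < \<tau> a then 1 else 0) \<le> v (a + 1)" using c a unfolding consv_def by auto
    have "\<tau> a \<noteq> \<tau> (a+1)" by (simp add: inj_eq[OF inj])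
    then show ?thesis using le by (auto split: if_splits)
  qed
  have chain: "\<forall>a. a \<ge> 1 \<longrightarrow> a + Suc d \<le> n \<longrightarrow> (v a < v (a + Suc d) \<or> (v a = v (a + Suc d) \<and> \<tau> a < \<tau> (a + Suc d)))" for d
  proof (induction d)
    case 0
    show ?case
    proof (intro allI impI)
      fix a assume "a \<ge> 1" "a + Suc 0 \<le> n"
      then have "a \<in> {1..<n}" by simp
      then show "v a < v (a + Suc 0) \<or> (v a = v (a + Suc 0) \<and> \<tau> a < \<tau> (a + Suc 0))"
        using base[of a] by simp
    qed
  next
    case (Suc d)
    show ?case
    proof (intro allI impI)
      fix a assume a1: "a \<ge> 1" and an: "a + Suc (Suc d) \<le> n"
      have h1: "v a < v (a + Suc d) \<or> (v a = v (a + Suc d) \<and> \<tau> a < \<tau> (a + Suc d))"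
        using Suc.IH[rule_format, of a] a1 an by simp
      have "a + Suc d \<in> {1..<n}" using a1 an by auto
      then have h2: "v (a + Suc d) < v (a + Suc (Suc d)) \<or> (v (a + Suc d) = v (a + Suc (Suc d)) \<and> \<tau> (a + Suc d) < \<tau> (a + Suc (Suc d)))"
        using base[of "a + Suc d"] by simp
      show "v a < v (a + Suc (Suc d)) \<or> (v a = v (a + Suc (Suc d)) \<and> \<tau> a < \<tau> (a + Suc (Suc d)))"
        using h1 h2 by auto
    qed
  qed
  show "\<forall>a\<in>{1..n}. \<forall>c\<in>{1..n}. (v a < v c \<or> (v a = v c \<and> \<tau> a < \<tau> c)) \<longrightarrow> a < c"
  proof (intro ballI impI)
    fix a c assume a: "a \<in> {1..n}" and cc: "c \<in> {1..n}" and L: "v a < v c \<or> (v a = v c \<and> \<tau> a < \<tau> c)"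
    show "a < c"
    proof (rule ccontr)
      assume "\<not> a < c"
      then consider "c = a" | "c < a" by linarith
      then show False
      proof cases
        case 1
        have "v a < v a \<or> (v a = v a \<and> \<tau> a < \<tau> a)" using L unfolding 1 .
        then show False by simp
      next
        case 2
        obtain d where "a = Suc (c + d)" using less_imp_Suc_add[OF 2] by (elim exE)
        then have d: "a = c + Suc d" by simp
        have c1: "c \<ge> 1" using cc by simp
        have c2: "c + Suc d \<le> n" using a d by simp
        have "v c < v (c + Suc d) \<or> (v c = v (c + Suc d) \<and> \<tau> c < \<tau> (c + Suc d))"
          using chain[of d] c1 c2 by blast
        then have "v c < v a \<or> (v c = v a \<and> \<tau> c < \<tau> a)" unfolding d .
        then show False using L by linarith
      qed
    qed
  qed
qed

lemma fiber_count:
  assumes p: "\<sigma> permutes {1..n}"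
  shows "card {w \<in> W n B. std n w = \<sigma>} = card {v \<in> W n B. consv n {a. inv \<sigma> (a + 1) < inv \<sigma> a} v}"
proof -
  define \<tau> where "\<tau> = inv \<sigma>"
  have tau: "\<tau> permutes {1..n}" unfolding \<tau>_def by (rule permutes_inv[OF p])
  have st: "\<sigma> (\<tau> x) = x" "\<tau> (\<sigma> x) = x" for x unfolding \<tau>_def by (simp_all add: permutes_inverses[OF p])
  have sin: "\<sigma> x \<in> {1..n} \<longleftrightarrow> x \<in> {1..n}" for x by (rule permutes_in_image[OF p])
  have tin: "\<tau> x \<in> {1..n} \<longleftrightarrow> x \<in> {1..n}" for x by (rule permutes_in_image[OF tau])
  define \<Psi>' where "\<Psi>' v = restrict (\<lambda>i. v (\<sigma> i)) {1..n}" for v :: "nat \<Rightarrow> nat"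
  define \<Psi> where "\<Psi> w = restrict (\<lambda>i. w (\<tau> i)) {1..n}" for w :: "nat \<Rightarrow> nat"
  have bij: "bij_betw \<Psi>' (W n B) (W n B)"
  proof (rule bij_betw_byWitness[where f' = \<Psi>])
    show "\<forall>a\<in>W n B. \<Psi> (\<Psi>' a) = a"
    proof
      fix v assume v: "v \<in> W n B"
      show "\<Psi> (\<Psi>' v) = v"
      proof
        fix i show "\<Psi> (\<Psi>' v) i = v i"
        proof (cases "i \<in> {1..n}")
          case True
          then have ti: "\<tau> i \<in> {1..n}" using tin by blast
          have "\<Psi> (\<Psi>' v) i = \<Psi>' v (\<tau> i)" unfolding \<Psi>_def using True by (rule restrict_apply')
          also have "\<dots> = v (\<sigma> (\<tau> i))" unfolding \<Psi>'_def using ti by (rule restrict_apply')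
          finally show ?thesis by (simp add: st)
        next
          case False
          have "\<Psi> (\<Psi>' v) i = undefined" unfolding \<Psi>_def restrict_def using False by (rule if_not_P)
          then show ?thesis using W_ext[OF v False] by simp
        qed
      qed
    qed
    show "\<forall>a'\<in>W n B. \<Psi>' (\<Psi> a') = a'"
    proof
      fix v assume v: "v \<in> W n B"
      show "\<Psi>' (\<Psi> v) = v"
      proof
        fix i show "\<Psi>' (\<Psi> v) i = v i"
        proof (cases "i \<in> {1..n}")
          case True
          then have ti: "\<sigma> i \<in> {1..n}" using sin by blast
          have "\<Psi>' (\<Psi> v) i = \<Psi> v (\<sigma> i)" unfolding \<Psi>'_def using True by (rule restrict_apply')
          also have "\<dots> = v (\<tau> (\<sigma> i))" unfolding \<Psi>_def using ti by (rule restrict_apply')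
          finally show ?thesis by (simp add: st)
        next
          case False
          have "\<Psi>' (\<Psi> v) i = undefined" unfolding \<Psi>'_def restrict_def using False by (rule if_not_P)
          then show ?thesis using W_ext[OF v False] by simp
        qed
      qed
    qed
    show "\<Psi>' ` W n B \<subseteq> W n B"
    proof
      fix x assume "x \<in> \<Psi>' ` W n B"
      then obtain v where v: "v \<in> W n B" and x: "x = \<Psi>' v" by auto
      show "x \<in> W n B"
      proof (rule W_memI)
        fix i assume i: "i \<in> {1..n}"
        then have si: "\<sigma> i \<in> {1..n}" using sin by blast
        have "x i = v (\<sigma> i)" unfolding x \<Psi>'_def using i by (rule restrict_apply')
        then show "x i < B" using W_lt[OF v si] by simp
      next
        fix i assume i: "i \<notin> {1..n}"
        show "x i = undefined" unfolding x \<Psi>'_def restrict_def using i by (rule if_not_P)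
      qed
    qed
    show "\<Psi> ` W n B \<subseteq> W n B"
    proof
      fix x assume "x \<in> \<Psi> ` W n B"
      then obtain v where v: "v \<in> W n B" and x: "x = \<Psi> v" by auto
      show "x \<in> W n B"
      proof (rule W_memI)
        fix i assume i: "i \<in> {1..n}"
        then have si: "\<tau> i \<in> {1..n}" using tin by blast
        have "x i = v (\<tau> i)" unfolding x \<Psi>_def using i by (rule restrict_apply')
        then show "x i < B" using W_lt[OF v si] by simp
      next
        fix i assume i: "i \<notin> {1..n}"
        show "x i = undefined" unfolding x \<Psi>_def restrict_def using i by (rule if_not_P)
      qed
    qed
  qed
  have key: "std n (\<Psi>' v) = \<sigma> \<longleftrightarrow> consv n {a. \<tau> (a + 1) < \<tau> a} v" for v
  proof -
    have ev: "\<Psi>' v x = v (\<sigma> x)" if "x \<in> {1..n}" for x unfolding \<Psi>'_def using that by (rule restrict_apply')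
    have "std n (\<Psi>' v) = \<sigma> \<longleftrightarrow> (\<forall>i\<in>{1..n}. \<forall>k\<in>{1..n}. lexlt (\<Psi>' v) k i \<longrightarrow> \<sigma> k < \<sigma> i)"
      by (rule std_eq_iff[OF p])
    also have "\<dots> \<longleftrightarrow> (\<forall>a\<in>{1..n}. \<forall>c\<in>{1..n}. (v a < v c \<or> (v a = v c \<and> \<tau> a < \<tau> c)) \<longrightarrow> a < c)"
    proof
      assume H: "\<forall>i\<in>{1..n}. \<forall>k\<in>{1..n}. lexlt (\<Psi>' v) k i \<longrightarrow> \<sigma> k < \<sigma> i"
      show "\<forall>a\<in>{1..n}. \<forall>c\<in>{1..n}. (v a < v c \<or> (v a = v c \<and> \<tau> a < \<tau> c)) \<longrightarrow> a < c"
      proof (intro ballI impI)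
        fix a c assume a: "a \<in> {1..n}" and c: "c \<in> {1..n}" and L: "v a < v c \<or> (v a = v c \<and> \<tau> a < \<tau> c)"
        have "lexlt (\<Psi>' v) (\<tau> a) (\<tau> c)"
        proof -
          have ta: "\<tau> a \<in> {1..n}" using a tin by blast
          have tc: "\<tau> c \<in> {1..n}" using c tin by blast
          have "\<Psi>' v (\<tau> a) = v a" "\<Psi>' v (\<tau> c) = v c" using ev[OF ta] ev[OF tc] by (simp_all add: st)
          then show ?thesis using L by (simp add: lexlt_def)
        qed
        then have "\<sigma> (\<tau> a) < \<sigma> (\<tau> c)" using H a c tin by blast
        then show "a < c" by (simp add: st)
      qed
    next
      assume H: "\<forall>a\<in>{1..n}. \<forall>c\<in>{1..n}. (v a < v c \<or> (v a = v c \<and> \<tau> a < \<tau> c)) \<longrightarrow> a < c"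
      show "\<forall>i\<in>{1..n}. \<forall>k\<in>{1..n}. lexlt (\<Psi>' v) k i \<longrightarrow> \<sigma> k < \<sigma> i"
      proof (intro ballI impI)
        fix i k assume i: "i \<in> {1..n}" and k: "k \<in> {1..n}" and L: "lexlt (\<Psi>' v) k i"
        have "v (\<sigma> k) < v (\<sigma> i) \<or> (v (\<sigma> k) = v (\<sigma> i) \<and> \<tau> (\<sigma> k) < \<tau> (\<sigma> i))"
          using L ev[OF i] ev[OF k] by (simp add: lexlt_def st)
        then show "\<sigma> k < \<sigma> i" using H i k sin by blast
      qed
    qed
    also have "\<dots> \<longleftrightarrow> consv n {a. \<tau> (a + 1) < \<tau> a} v" by (rule good_iff[OF tau])
    finally show ?thesis .
  qed
  have "{w \<in> W n B. std n w = \<sigma>} = \<Psi>' ` {v \<in> W n B. consv n {a. \<tau> (a + 1) < \<tau> a} v}"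
  proof -
    have "{w \<in> W n B. std n w = \<sigma>} = {w \<in> \<Psi>' ` W n B. std n w = \<sigma>}"
      using bij by (simp add: bij_betw_def)
    also have "\<dots> = \<Psi>' ` {v \<in> W n B. consv n {a. \<tau> (a + 1) < \<tau> a} v}"
      using key by auto
    finally show ?thesis .
  qed
  also have "card \<dots> = card {v \<in> W n B. consv n {a. \<tau> (a + 1) < \<tau> a} v}"
    by (rule card_image, rule inj_on_subset[OF bij_betw_imp_inj_on[OF bij]]) auto
  finally show ?thesis by (simp add: \<tau>_def)
qed

lemma fiber_binom:
  assumes p: "\<sigma> permutes {1..n}" and n: "n \<ge> 1"
  shows "real (card {w \<in> W n B. std n w = \<sigma>})
     = binom (int n + int B - int (descents n (inv \<sigma>)) - 1) n"
proof -
  obtain m where m: "n = Suc m" using n by (cases n) auto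
  have d: "card ({a. inv \<sigma> (a + 1) < inv \<sigma> a} \<inter> {1..<n}) = descents n (inv \<sigma>)"
    unfolding descents_def by (intro arg_cong[where f = card]) auto
  show ?thesis
    unfolding fiber_count[OF p] using count_consv[of m B "{a. inv \<sigma> (a + 1) < inv \<sigma> a}"] d
    by (simp add: m algebra_simps)
qed

theorem theorem1p1:
  fixes n b r j :: nat
  assumes "n \<ge> 2" and "b \<ge> 2" and "j \<le> n - 1"
  shows "carriesPpow b n r 0 j =
    (\<Sum>\<sigma>\<in>{\<sigma>. \<sigma> permutes {1..n} \<and> descents n \<sigma> = j}. shuffleQ (b ^ r) n \<sigma>)"
proof -
  have b: "b > 0" and n: "n \<ge> 1" using assms by auto
  define B where "B = b ^ r"
  have B: "B > 0" using b by (simp add: B_def)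
  define T where "T = {\<sigma>. \<sigma> permutes {1..n} \<and> descents n \<sigma> = j}"
  have fT: "finite T" unfolding T_def
    by (rule finite_subset[OF _ finite_permutations[of "{1..n}"]]) auto
  have "(\<Sum>\<sigma>\<in>T. shuffleQ B n \<sigma>) = (\<Sum>\<sigma>\<in>T. real (card {w \<in> W n B. std n w = \<sigma>}) / real B ^ n)"
  proof (intro sum.cong refl)
    fix \<sigma> assume "\<sigma> \<in> T"
    then have p: "\<sigma> permutes {1..n}" unfolding T_def by blast
    show "shuffleQ B n \<sigma> = real (card {w \<in> W n B. std n w = \<sigma>}) / real B ^ n"
      unfolding shuffleQ_def fiber_binom[OF p n] ..
  qed
  also have "\<dots> = real (\<Sum>\<sigma>\<in>T. card {w \<in> W n B. std n w = \<sigma>}) / real B ^ n"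
    by (simp add: sum_divide_distrib)
  also have "(\<Sum>\<sigma>\<in>T. card {w \<in> W n B. std n w = \<sigma>}) = card {w \<in> W n B. desw n w = j}"
  proof -
    have "(\<Sum>\<sigma>\<in>T. card {w \<in> W n B. std n w = \<sigma>})
        = (\<Sum>\<sigma>\<in>T. sum (\<lambda>_. 1) {w. w \<in> {w \<in> W n B. desw n w = j} \<and> std n w = \<sigma>})"
    proof (intro sum.cong refl)
      fix \<sigma> assume "\<sigma> \<in> T"
      then have "descents n \<sigma> = j" by (simp add: T_def)
      then have "{w \<in> W n B. std n w = \<sigma>} = {w. w \<in> {w \<in> W n B. desw n w = j} \<and> std n w = \<sigma>}"
        by (auto simp: desw_std)
      then show "card {w \<in> W n B. std n w = \<sigma>} = sum (\<lambda>_. 1) {w. w \<in> {w \<in> W n B. desw n w = j} \<and> std n w = \<sigma>}"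
        by simp
    qed
    also have "\<dots> = sum (\<lambda>_. 1) {w \<in> W n B. desw n w = j}"
    proof -
      have img: "std n ` {w \<in> W n B. desw n w = j} \<subseteq> T"
      proof
        fix s assume "s \<in> std n ` {w \<in> W n B. desw n w = j}"
        then obtain w where "w \<in> W n B" "desw n w = j" "s = std n w" by auto
        then show "s \<in> T" unfolding T_def using std_permutes[of n w] desw_std[of n w] by simp
      qed
      show ?thesis by (rule sum.group[OF _ fT img]) simp
    qed
    finally show ?thesis by simp
  qed
  also have "card {w \<in> W n B. desw n w = j} = cntR B n j" by (rule partB[OF B])
  finally have R: "(\<Sum>\<sigma>\<in>T. shuffleQ B n \<sigma>) = real (cntR B n j) / real B ^ n" .
  show ?thesis unfolding Ppow_cnt[OF b n] R[unfolded T_def B_def] by simp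
qed

end
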